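(* Let $\Gamma$ be a locally finite vertex-transitive weighted graph with distinguished vertex $e$. Let $x,y$ be vertices and suppose there exists a finitely supported non-zero function $f:\Gamma\to\mathbb{R}$ that is harmonic at every vertex other than $x$ and $y$. Then there exists $N>0$ such that the conditional probability $\mathbb{P}_g[\,T_x<T_y\mid\min\{T_x,T_y\}<\infty\,]$ is independent of $g$ for all vertices $g$ with $d(e,g)\ge N$.
   Context: Weighted graph: undirected, no loops or multiple edges, weights $\omega_{xy}=\omega_{yx}>0$, $\deg x=\sum_{y\sim x}\omega_{xy}$; vertex-transitive means the group of weight-preserving automorphisms acts transitively on vertices. $f$ is harmonic at $z$ if $f(z)=\frac{1}{\deg z}\sum_{w\sim z}\omega_{zw}f(w)$. $d$ is the graph metric. $(X_t)_{t\ge0}$ is the random walk stepping from $z$ to neighbour $w$ with probability $\omega_{zw}/\deg z$; $\mathbb{P}_g$ is its law started at $X_0=g$, and $T_z=\inf\{t\ge0:X_t=z\}$ (with $\inf\emptyset=\infty$). *)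

theory Defs
  imports "HOL-Probability.Probability"
begin

definition weighted_graph :: "('v \<Rightarrow> 'v \<Rightarrow> real) \<Rightarrow> bool" where
  "weighted_graph w \<longleftrightarrow> (\<forall>x y. w x y = w y x) \<and> (\<forall>x y. w x y \<ge> 0) \<and> (\<forall>x. w x x = 0)"

definition adj :: "('v \<Rightarrow> 'v \<Rightarrow> real) \<Rightarrow> 'v \<Rightarrow> 'v \<Rightarrow> bool" where
  "adj w x y \<longleftrightarrow> w x y > 0"

definition nbrs :: "('v \<Rightarrow> 'v \<Rightarrow> real) \<Rightarrow> 'v \<Rightarrow> 'v set" where
  "nbrs w x = {y. adj w x y}"

definition locally_finite :: "('v \<Rightarrow> 'v \<Rightarrow> real) \<Rightarrow> bool" where
  "locally_finite w \<longleftrightarrow> (\<forall>x. finite (nbrs w x))"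

definition deg :: "('v \<Rightarrow> 'v \<Rightarrow> real) \<Rightarrow> 'v \<Rightarrow> real" where
  "deg w x = (\<Sum>y\<in>nbrs w x. w x y)"

definition vertex_transitive :: "('v \<Rightarrow> 'v \<Rightarrow> real) \<Rightarrow> bool" where
  "vertex_transitive w \<longleftrightarrow>
     (\<forall>a b. \<exists>\<sigma>. bij \<sigma> \<and> (\<forall>u v. w (\<sigma> u) (\<sigma> v) = w u v) \<and> \<sigma> a = b)"

text \<open>Connectedness (so that the graph metric is finite).\<close>
definition connected_graph :: "('v \<Rightarrow> 'v \<Rightarrow> real) \<Rightarrow> bool" where
  "connected_graph w \<longleftrightarrow> (\<forall>a b. \<exists>n. (adj w ^^ n) a b)"

definition gdist :: "('v \<Rightarrow> 'v \<Rightarrow> real) \<Rightarrow> 'v \<Rightarrow> 'v \<Rightarrow> nat" where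
  "gdist w a b = (LEAST n. (adj w ^^ n) a b)"

definition harmonic_at :: "('v \<Rightarrow> 'v \<Rightarrow> real) \<Rightarrow> ('v \<Rightarrow> real) \<Rightarrow> 'v \<Rightarrow> bool" where
  "harmonic_at w f z \<longleftrightarrow> f z = (1 / deg w z) * (\<Sum>u\<in>nbrs w z. w z u * f u)"

definition step :: "('v \<Rightarrow> 'v \<Rightarrow> real) \<Rightarrow> 'v \<Rightarrow> 'v pmf" where
  "step w z = embed_pmf (\<lambda>u. w z u / deg w z)"

primrec walk :: "('v \<Rightarrow> 'v \<Rightarrow> real) \<Rightarrow> nat \<Rightarrow> 'v \<Rightarrow> 'v list pmf" where
  "walk w 0 g = return_pmf [g]"
| "walk w (Suc n) g = bind_pmf (walk w n g) (\<lambda>p. map_pmf (\<lambda>u. p @ [u]) (step w (last p)))"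

text \<open>P_g[T_x < T_y]: the events {T_x < T_y, T_x \<le> n} increase to {T_x < T_y}.\<close>
definition hit_first :: "('v \<Rightarrow> 'v \<Rightarrow> real) \<Rightarrow> 'v \<Rightarrow> 'v \<Rightarrow> 'v \<Rightarrow> real" where
  "hit_first w g x y = (SUP n. measure_pmf.prob (walk w n g)
      {p. x \<in> set p \<and> y \<notin> set (takeWhile (\<lambda>v. v \<noteq> x) p)})"

definition hit_either :: "('v \<Rightarrow> 'v \<Rightarrow> real) \<Rightarrow> 'v \<Rightarrow> 'v \<Rightarrow> 'v \<Rightarrow> real" where
  "hit_either w g x y = (SUP n. measure_pmf.prob (walk w n g) {p. x \<in> set p \<or> y \<in> set p})"

definition cond_hit :: "('v \<Rightarrow> 'v \<Rightarrow> real) \<Rightarrow> 'v \<Rightarrow> 'v \<Rightarrow> 'v \<Rightarrow> real" where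
  "cond_hit w g x y = hit_first w g x y / hit_either w g x y"

end

theory Submission
  imports Defs
begin


lemma prob_bind_pmf:
  "measure_pmf.prob (bind_pmf M N) X = (\<integral>x. measure_pmf.prob (N x) X \<partial>measure_pmf M)"
proof -
  interpret subprob_space "measure_pmf M" by (rule prob_space_imp_subprob_space) unfold_locales
  have m: "(\<lambda>x. measure_pmf (N x)) \<in> measurable (measure_pmf M) (subprob_algebra (count_space UNIV))"
    using measurable_measure_pmf[of N] by simp
  show ?thesis unfolding measure_pmf_bind
    by (subst measure_pmf.measure_bind[OF m]) auto
qed

definition Pf :: "('v \<Rightarrow> 'v \<Rightarrow> real) \<Rightarrow> ('v \<Rightarrow> real) \<Rightarrow> 'v \<Rightarrow> real" where
  "Pf w h z = (\<Sum>u\<in>nbrs w z. w z u / deg w z * h u)"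

lemma walk_ne: "p \<in> set_pmf (walk w n g) \<Longrightarrow> p \<noteq> [] \<and> hd p = g"
  by (induction n arbitrary: p) auto

lemma walk_first: "walk w (Suc n) g = bind_pmf (step w g) (\<lambda>u. map_pmf ((#) g) (walk w n u))"
proof (induction n arbitrary: g)
  case 0
  then show ?case by (simp add: bind_return_pmf map_pmf_def)
next
  case (Suc n)
  have "walk w (Suc (Suc n)) g = bind_pmf (walk w (Suc n) g) (\<lambda>p. map_pmf (\<lambda>u. p @ [u]) (step w (last p)))"
    by simp
  also have "\<dots> = bind_pmf (step w g) (\<lambda>u. bind_pmf (map_pmf ((#) g) (walk w n u))
          (\<lambda>p. map_pmf (\<lambda>v. p @ [v]) (step w (last p))))"
    by (subst Suc) (simp add: bind_assoc_pmf del: walk.simps)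
  also have "\<dots> = bind_pmf (step w g) (\<lambda>u. map_pmf ((#) g) (walk w (Suc n) u))"
  proof (rule bind_pmf_cong[OF refl])
    fix u
    have "bind_pmf (map_pmf ((#) g) (walk w n u)) (\<lambda>p. map_pmf (\<lambda>v. p @ [v]) (step w (last p)))
       = bind_pmf (walk w n u) (\<lambda>p. map_pmf (\<lambda>v. (g # p) @ [v]) (step w (last (g # p))))"
      by (simp add: bind_map_pmf)
    also have "\<dots> = bind_pmf (walk w n u) (\<lambda>p. map_pmf ((#) g) (map_pmf (\<lambda>v. p @ [v]) (step w (last p))))"
      by (rule bind_pmf_cong[OF refl]) (auto dest: walk_ne simp: pmf.map_comp o_def)
    also have "\<dots> = map_pmf ((#) g) (walk w (Suc n) u)"
      by (simp add: map_bind_pmf)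
    finally show "bind_pmf (map_pmf ((#) g) (walk w n u)) (\<lambda>p. map_pmf (\<lambda>v. p @ [v]) (step w (last p)))
       = map_pmf ((#) g) (walk w (Suc n) u)" .
  qed
  finally show ?case .
qed

lemma prob_walk_Suc: "measure_pmf.prob (walk w (Suc n) g) E =
   (\<integral>u. measure_pmf.prob (walk w n u) ((#) g -` E) \<partial>measure_pmf (step w g))"
  by (subst walk_first) (simp add: prob_bind_pmf del: walk.simps)

locale G =
  fixes w :: "'v \<Rightarrow> 'v \<Rightarrow> real"
  assumes wg: "weighted_graph w" and conn: "connected_graph w" and lf: "locally_finite w"
    and inf: "infinite (UNIV::'v set)"
begin

lemma w_sym: "w a b = w b a" and w_nn: "w a b \<ge> 0"
  using wg by (auto simp: weighted_graph_def)

lemma adj_sym: "adj w a b \<longleftrightarrow> adj w b a"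
  by (simp add: adj_def w_sym)

lemma fin_nbrs: "finite (nbrs w z)"
  using lf by (simp add: locally_finite_def)

lemma nbrs_iff: "u \<in> nbrs w z \<longleftrightarrow> w z u > 0"
  by (simp add: nbrs_def adj_def)

lemma w_zero: "u \<notin> nbrs w z \<Longrightarrow> w z u = 0"
  using w_nn[of z u] by (auto simp: nbrs_iff)

lemma nbrs_ne: "nbrs w z \<noteq> {}"
proof -
  obtain t where t: "t \<noteq> z" using inf by (metis UNIV_I ex_new_if_finite finite.emptyI finite_insert insertI1)
  obtain n where n: "(adj w ^^ n) z t" using conn by (auto simp: connected_graph_def)
  then obtain m where "n = Suc m" using t by (cases n) auto
  with n obtain v where "adj w z v" using relpowp_Suc_D2 by metis
  then show ?thesis by (auto simp: nbrs_def)
qed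

lemma deg_pos: "deg w z > 0"
  unfolding deg_def using fin_nbrs nbrs_ne
  by (intro sum_pos) (auto simp: nbrs_iff)

lemma pmf_step: "pmf (step w z) u = w z u / deg w z"
  unfolding step_def
proof (rule pmf_embed_pmf)
  show "\<And>x. 0 \<le> w z x / deg w z" by (intro divide_nonneg_pos w_nn deg_pos)
  have "(\<integral>\<^sup>+x. ennreal (w z x / deg w z) \<partial>count_space UNIV) = (\<Sum>x\<in>nbrs w z. ennreal (w z x / deg w z))"
    by (rule nn_integral_count_space') (auto simp: fin_nbrs w_zero)
  also have "\<dots> = ennreal (\<Sum>x\<in>nbrs w z. w z x / deg w z)"
    by (subst sum_ennreal) (auto intro!: divide_nonneg_pos w_nn deg_pos)
  also have "(\<Sum>x\<in>nbrs w z. w z x / deg w z) = 1"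
    using deg_pos[of z] by (simp add: sum_divide_distrib[symmetric] deg_def)
  finally show "(\<integral>\<^sup>+x. ennreal (w z x / deg w z) \<partial>count_space UNIV) = 1" by simp
qed

lemma set_step: "set_pmf (step w z) \<subseteq> nbrs w z"
  using w_nn[of z] by (auto simp: set_pmf_eq pmf_step nbrs_iff less_le)

lemma exp_step: "(\<integral>u. h u \<partial>measure_pmf (step w z)) = Pf w h z"
  unfolding Pf_def
  by (subst integral_measure_pmf_real[where A="nbrs w z"])
     (use fin_nbrs set_step in \<open>auto simp: pmf_step intro!: sum.cong\<close>)

lemma prob_walk_Suc': "measure_pmf.prob (walk w (Suc n) g) E =
   Pf w (\<lambda>u. measure_pmf.prob (walk w n u) ((#) g -` E)) g"
  by (simp only: prob_walk_Suc exp_step)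

end


definition hitA :: "('v \<Rightarrow> 'v \<Rightarrow> real) \<Rightarrow> 'v \<Rightarrow> 'v \<Rightarrow> nat \<Rightarrow> 'v \<Rightarrow> real" where
  "hitA w a b n g = measure_pmf.prob (walk w n g) {p. a \<in> set p \<and> b \<notin> set (takeWhile (\<lambda>v. v \<noteq> a) p)}"

definition hitH :: "('v \<Rightarrow> 'v \<Rightarrow> real) \<Rightarrow> 'v \<Rightarrow> 'v \<Rightarrow> nat \<Rightarrow> 'v \<Rightarrow> real" where
  "hitH w a b n g = measure_pmf.prob (walk w n g) {p. a \<in> set p \<or> b \<in> set p}"

context G begin

lemma Pf_w_nn: "w z u / deg w z \<ge> 0"
  by (intro divide_nonneg_pos w_nn deg_pos)

lemma Pf_const[simp]: "Pf w (\<lambda>_. c) z = c"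
  using deg_pos[of z] by (simp add: Pf_def sum_distrib_right[symmetric] sum_divide_distrib[symmetric] deg_def)

lemma Pf_add: "Pf w (\<lambda>u. h u + k u) z = Pf w h z + Pf w k z"
  by (simp add: Pf_def distrib_left sum.distrib)

lemma Pf_scale: "Pf w (\<lambda>u. c * h u) z = c * Pf w h z"
  by (simp add: Pf_def sum_distrib_left mult_ac)

lemma Pf_diff: "Pf w (\<lambda>u. h u - k u) z = Pf w h z - Pf w k z"
  by (simp add: Pf_def right_diff_distrib sum_subtractf)

lemma Pf_sum: "Pf w (\<lambda>u. \<Sum>j\<in>J. h j u) z = (\<Sum>j\<in>J. Pf w (h j) z)"
  by (simp add: Pf_def sum_distrib_left sum.swap[of _ J])

lemma Pf_mono: "(\<And>u. u \<in> nbrs w z \<Longrightarrow> h u \<le> k u) \<Longrightarrow> Pf w h z \<le> Pf w k z"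
  unfolding Pf_def by (intro sum_mono mult_left_mono Pf_w_nn) auto

lemma Pf_nonneg: "(\<And>u. h u \<ge> 0) \<Longrightarrow> Pf w h z \<ge> 0"
  using Pf_mono[of z "\<lambda>_. 0" h] by simp

lemma Pf_le_const: "(\<And>u. h u \<le> c) \<Longrightarrow> Pf w h z \<le> c"
  using Pf_mono[of z h "\<lambda>_. c"] by simp

lemma Pf_cong: "(\<And>u. u \<in> nbrs w z \<Longrightarrow> h u = k u) \<Longrightarrow> Pf w h z = Pf w k z"
  unfolding Pf_def by (intro sum.cong) auto

lemma Pf_single: "(\<And>u. h u \<ge> 0) \<Longrightarrow> v \<in> nbrs w z \<Longrightarrow> Pf w h z \<ge> w z v / deg w z * h v"
  unfolding Pf_def
proof (rule member_le_sum)
  fix u assume h: "\<And>u. h u \<ge> 0"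
  show "0 \<le> w z u / deg w z * h u" using h by (metis mult_nonneg_nonneg Pf_w_nn)
qed (auto simp: fin_nbrs)

lemma Pf_pos_w: "v \<in> nbrs w z \<Longrightarrow> w z v / deg w z > 0"
  using deg_pos[of z] by (simp add: nbrs_iff)

lemma hitA_0: "hitA w a b 0 g = (if g = a then 1 else 0)"
  by (simp add: hitA_def)

lemma hitA_Suc: assumes "a \<noteq> b"
  shows "hitA w a b (Suc n) g = (if g = a then 1 else if g = b then 0 else Pf w (hitA w a b n) g)"
proof -
  let ?E = "{p. a \<in> set p \<and> b \<notin> set (takeWhile (\<lambda>v. v \<noteq> a) p)}"
  have "hitA w a b (Suc n) g = Pf w (\<lambda>u. measure_pmf.prob (walk w n u) ((#) g -` ?E)) g"
    unfolding hitA_def by (rule prob_walk_Suc')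
  also have "\<dots> = (if g = a then 1 else if g = b then 0 else Pf w (hitA w a b n) g)"
  proof -
    have "(#) g -` ?E = (if g = a then UNIV else if g = b then {} else ?E)"
      using assms by auto
    note eq = this
    show ?thesis by (subst eq) (cases "g = a"; cases "g = b"; simp add: hitA_def[abs_def])
  qed
  finally show ?thesis .
qed

lemma hitH_0: "hitH w a b 0 g = (if g = a \<or> g = b then 1 else 0)"
  by (auto simp add: hitH_def)

lemma hitH_Suc:
  shows "hitH w a b (Suc n) g = (if g = a \<or> g = b then 1 else Pf w (hitH w a b n) g)"
proof -
  let ?E = "{p. a \<in> set p \<or> b \<in> set p}"
  have "hitH w a b (Suc n) g = Pf w (\<lambda>u. measure_pmf.prob (walk w n u) ((#) g -` ?E)) g"
    unfolding hitH_def by (rule prob_walk_Suc')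
  also have "\<dots> = (if g = a \<or> g = b then 1 else Pf w (hitH w a b n) g)"
  proof -
    have "(#) g -` ?E = (if g = a \<or> g = b then UNIV else ?E)"
      by auto
    note eq = this
    show ?thesis by (subst eq) (cases "g = a \<or> g = b"; simp add: hitH_def[abs_def])
  qed
  finally show ?thesis .
qed

lemma hitA_bnd: "0 \<le> hitA w a b n g" "hitA w a b n g \<le> 1"
  by (simp_all add: hitA_def)

lemma hitH_bnd: "0 \<le> hitH w a b n g" "hitH w a b n g \<le> 1"
  by (simp_all add: hitH_def)

lemma hitA_mono: assumes "a \<noteq> b" shows "hitA w a b n g \<le> hitA w a b (Suc n) g"
proof (induction n arbitrary: g)
  case 0
  then show ?case using assms by (auto simp: hitA_0 hitA_Suc intro!: Pf_nonneg hitA_bnd)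
next
  case (Suc n)
  then show ?case using assms by (auto simp: hitA_Suc[OF assms, of "Suc n"] hitA_Suc[OF assms, of n] intro!: Pf_mono)
qed

lemma hitH_mono: "hitH w a b n g \<le> hitH w a b (Suc n) g"
proof (induction n arbitrary: g)
  case 0
  then show ?case by (auto simp: hitH_0 hitH_Suc intro!: Pf_nonneg hitH_bnd)
next
  case (Suc n)
  then show ?case by (auto simp: hitH_Suc[of _ _ "Suc n"] hitH_Suc[of _ _ n] intro!: Pf_mono)
qed

lemma hitH_eq: assumes "a \<noteq> b" shows "hitH w a b n g = hitA w a b n g + hitA w b a n g"
proof (induction n arbitrary: g)
  case 0
  then show ?case using assms by (auto simp: hitA_0 hitH_0)
next
  case (Suc n)
  have e: "hitH w a b n = (\<lambda>u. hitA w a b n u + hitA w b a n u)" using Suc.IH by auto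
  show ?case using assms
    by (auto simp: hitA_Suc[OF assms] hitA_Suc[OF not_sym[OF assms]] hitH_Suc e Pf_add)
qed

lemma hitH_pos: "(adj w ^^ k) g t \<Longrightarrow> t = a \<or> t = b \<Longrightarrow> hitH w a b k g > 0"
proof (induction k arbitrary: g)
  case 0
  then show ?case by (auto simp: hitH_0)
next
  case (Suc k)
  from relpowp_Suc_D2[OF Suc.prems(1)] obtain v where v: "adj w g v" "(adj w ^^ k) v t" by blast
  show ?case
  proof (cases "g = a \<or> g = b")
    case True then show ?thesis by (simp add: hitH_Suc)
  next
    case False
    have "0 < w g v / deg w g * hitH w a b k v"
      using v(1) by (intro mult_pos_pos Pf_pos_w Suc.IH[OF v(2) Suc.prems(2)]) (simp add: nbrs_def)
    also have "\<dots> \<le> Pf w (hitH w a b k) g"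
      using v(1) by (intro Pf_single hitH_bnd) (simp add: nbrs_def)
    finally show ?thesis using False by (simp add: hitH_Suc)
  qed
qed

end


locale H = G +
  fixes x y :: 'v and f :: "'v \<Rightarrow> real"
  assumes xy: "x \<noteq> y" and fs: "finite {z. f z \<noteq> 0}"
    and harm: "\<forall>z. z \<noteq> x \<and> z \<noteq> y \<longrightarrow> harmonic_at w f z"
begin

definition Q :: "('v \<Rightarrow> real) \<Rightarrow> 'v \<Rightarrow> real" where
  "Q h z = (if z = x \<or> z = y then 0 else Pf w h z)"

lemma Q_out: "z \<noteq> x \<Longrightarrow> z \<noteq> y \<Longrightarrow> Q h z = Pf w h z"
  and Q_x[simp]: "Q h x = 0" and Q_y[simp]: "Q h y = 0"
  by (auto simp: Q_def)

lemma Q_add: "Q (\<lambda>u. h u + k u) = (\<lambda>z. Q h z + Q k z)"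
  by (auto simp: Q_def Pf_add)

lemma Q_scale: "Q (\<lambda>u. c * h u) = (\<lambda>z. c * Q h z)"
  by (auto simp: Q_def Pf_scale)

lemma Q_sum: "Q (\<lambda>u. \<Sum>j\<in>J. h j u) = (\<lambda>z. \<Sum>j\<in>J. Q (h j) z)"
  by (auto simp: Q_def Pf_sum)

lemma Q_mono: "(\<And>u. h u \<le> k u) \<Longrightarrow> Q h z \<le> Q k z"
  by (auto simp: Q_def intro!: Pf_mono)

lemma Q_le_const: "(\<And>u. h u \<le> c) \<Longrightarrow> 0 \<le> c \<Longrightarrow> Q h z \<le> c"
  by (auto simp: Q_def intro!: Pf_le_const)

lemma Qn_Suc: "(Q ^^ Suc n) h = Q ((Q ^^ n) h)"
  by simp

lemma Qn_add: "(Q ^^ n) (\<lambda>u. h u + k u) = (\<lambda>z. (Q ^^ n) h z + (Q ^^ n) k z)"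
  by (induction n) (simp_all add: Q_add)

lemma Qn_scale: "(Q ^^ n) (\<lambda>u. c * h u) = (\<lambda>z. c * (Q ^^ n) h z)"
  by (induction n) (simp_all add: Q_scale)

lemma Qn_sum: "(Q ^^ n) (\<lambda>u. \<Sum>j\<in>J. h j u) = (\<lambda>z. \<Sum>j\<in>J. (Q ^^ n) (h j) z)"
  by (induction n) (simp_all add: Q_sum)

lemma Qn_mono: "(\<And>u. h u \<le> k u) \<Longrightarrow> (Q ^^ n) h z \<le> (Q ^^ n) k z"
  by (induction n arbitrary: z) (auto intro!: Q_mono)

lemma Qn_le_const: "(\<And>u. h u \<le> c) \<Longrightarrow> 0 \<le> c \<Longrightarrow> (Q ^^ n) h z \<le> c"
  by (induction n arbitrary: z) (auto intro!: Q_le_const)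

lemma Qn_zero: "(Q ^^ n) (\<lambda>_. 0) = (\<lambda>_. 0)"
  by (induction n) (auto simp: Q_def)

lemma Qn_nonneg: "(\<And>u. 0 \<le> h u) \<Longrightarrow> 0 \<le> (Q ^^ n) h z"
  using Qn_mono[of "\<lambda>_. 0" h n z] Qn_zero by simp

lemma Qn_comp: "(Q ^^ (k + m)) h = (Q ^^ k) ((Q ^^ m) h)"
  by (simp add: funpow_add)

lemma Pf_f: "z \<noteq> x \<Longrightarrow> z \<noteq> y \<Longrightarrow> Pf w f z = f z"
  using harm deg_pos[of z] unfolding harmonic_at_def Pf_def
  by (auto simp: sum_distrib_left sum_divide_distrib)

definition f0 :: "'v \<Rightarrow> real" where "f0 z = (if z = x \<or> z = y then 0 else f z)"

lemma identity: "f g = f x * hitA w x y n g + f y * hitA w y x n g + (Q ^^ n) f0 g"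
proof (induction n arbitrary: g)
  case 0
  then show ?case using xy by (auto simp: hitA_0 f0_def)
next
  case (Suc n)
  show ?case
  proof (cases "g = x \<or> g = y")
    case True
    then show ?thesis using xy by (auto simp: hitA_Suc)
  next
    case False
    have e: "f = (\<lambda>u. f x * hitA w x y n u + f y * hitA w y x n u + (Q ^^ n) f0 u)"
      by (rule ext) (rule Suc.IH)
    have "f g = Pf w f g" using False Pf_f by auto
    also have "\<dots> = f x * Pf w (hitA w x y n) g + f y * Pf w (hitA w y x n) g + Pf w ((Q ^^ n) f0) g"
      by (subst e) (simp add: Pf_add Pf_scale)
    finally show ?thesis using False xy by (simp add: hitA_Suc Q_out)
  qed
qed

definition \<sigma> :: "'v \<Rightarrow> real" where
  "\<sigma> z = (if z = x \<or> z = y then 0 else Pf w (\<lambda>u. (f u - f z)^2) z)"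

lemma \<sigma>_nn: "0 \<le> \<sigma> z"
  by (auto simp: \<sigma>_def intro!: Pf_nonneg)

lemma \<sigma>_eq: assumes "z \<noteq> x" "z \<noteq> y" shows "f z^2 + \<sigma> z = Pf w (\<lambda>u. f u^2) z"
proof -
  have e: "(\<lambda>u. (f u - f z)^2) = (\<lambda>u. f u^2 + ((-2*f z) * f u + f z^2))"
    by (auto simp: power2_eq_square algebra_simps)
  show ?thesis using assms Pf_f[OF assms]
    unfolding \<sigma>_def e Pf_add Pf_scale Pf_const by (simp add: power2_eq_square)
qed

definition K :: real where "K = Max (insert 0 ((\<lambda>z. f z^2) ` {z. f z \<noteq> 0}))"

lemma K_ge: "f z^2 \<le> K"
  unfolding K_def using fs by (cases "f z = 0") (auto intro!: Max_ge)

lemma energy: "f g^2 + (\<Sum>k<n. (Q ^^ k) \<sigma> g) \<le> K"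
proof (induction n arbitrary: g)
  case 0
  then show ?case using K_ge by simp
next
  case (Suc n)
  have sh: "(\<Sum>k<Suc n. (Q ^^ k) \<sigma> g) = \<sigma> g + (\<Sum>k<n. Q ((Q ^^ k) \<sigma>) g)"
    by (subst sum.lessThan_Suc_shift) simp
  show ?case
  proof (cases "g = x \<or> g = y")
    case True
    have z: "\<sigma> g = 0" "\<And>k. Q ((Q^^k) \<sigma>) g = 0" using True by (auto simp: \<sigma>_def)
    show ?thesis unfolding sh z using K_ge[of g] by simp
  next
    case False
    have "f g^2 + (\<Sum>k<Suc n. (Q ^^ k) \<sigma> g) = Pf w (\<lambda>u. f u^2) g + Pf w (\<lambda>u. \<Sum>k<n. (Q ^^ k) \<sigma> u) g"
      using False \<sigma>_eq[of g] unfolding sh by (simp add: Q_out Pf_sum)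
    also have "\<dots> = Pf w (\<lambda>u. f u^2 + (\<Sum>k<n. (Q ^^ k) \<sigma> u)) g"
      by (simp add: Pf_add)
    also have "\<dots> \<le> K" by (intro Pf_le_const Suc.IH)
    finally show ?thesis .
  qed
qed

lemma Q\<sigma>_lim: "(\<lambda>k. (Q ^^ k) \<sigma> g) \<longlonglongrightarrow> 0"
proof -
  have "summable (\<lambda>k. (Q ^^ k) \<sigma> g)"
  proof (rule summableI_nonneg_bounded)
    show "\<And>n. 0 \<le> (Q ^^ n) \<sigma> g" by (intro Qn_nonneg \<sigma>_nn)
    show "(\<Sum>k<n. (Q ^^ k) \<sigma> g) \<le> K" for n
    proof -
      have "f g^2 + (\<Sum>k<n. (Q ^^ k) \<sigma> g) \<le> K" by (rule energy)
      moreover have "0 \<le> f g^2" by simp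
      ultimately show ?thesis by linarith
    qed
  qed
  then show ?thesis by (rule summable_LIMSEQ_zero)
qed

definition B :: "'v set" where "B = {z. z \<noteq> x \<and> z \<noteq> y \<and> \<sigma> z > 0}"
definition C :: "'v set" where "C = {z. z \<noteq> x \<and> z \<noteq> y \<and> \<sigma> z = 0 \<and> f z \<noteq> 0}"
definition indB :: "'v \<Rightarrow> real" where "indB z = (if z \<in> B then 1 else 0)"
definition indC :: "'v \<Rightarrow> real" where "indC z = (if z \<in> C then 1 else 0)"

lemma B_fin: "finite B"
proof (rule finite_subset)
  show "finite ({z. f z \<noteq> 0} \<union> (\<Union>s\<in>{z. f z \<noteq> 0}. nbrs w s))"
    using fs fin_nbrs by auto
  show "B \<subseteq> {z. f z \<noteq> 0} \<union> (\<Union>s\<in>{z. f z \<noteq> 0}. nbrs w s)"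
  proof
    fix z assume z: "z \<in> B"
    show "z \<in> {z. f z \<noteq> 0} \<union> (\<Union>s\<in>{z. f z \<noteq> 0}. nbrs w s)"
    proof (cases "f z = 0")
      case True
      have "\<exists>u\<in>nbrs w z. f u \<noteq> 0"
      proof (rule ccontr)
        assume "\<not> ?thesis"
        then have "Pf w (\<lambda>u. (f u - f z)^2) z = Pf w (\<lambda>_. 0) z"
          using True by (intro Pf_cong) auto
        then show False using z by (auto simp: B_def \<sigma>_def)
      qed
      then obtain u where "u \<in> nbrs w z" "f u \<noteq> 0" by blast
      then show ?thesis using adj_sym by (auto simp: nbrs_def)
    qed auto
  qed
qed

lemma C_fin: "finite C"
  by (rule finite_subset[OF _ fs]) (auto simp: C_def)

lemma C_nbr: assumes "z \<in> C" "u \<in> nbrs w z" shows "f u = f z"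
proof -
  have "Pf w (\<lambda>u. (f u - f z)^2) z = 0"
    using assms(1) by (auto simp: C_def \<sigma>_def)
  then have "(\<Sum>v\<in>nbrs w z. w z v / deg w z * (f v - f z)^2) = 0"
    unfolding Pf_def .
  moreover have "\<And>v. v \<in> nbrs w z \<Longrightarrow> 0 \<le> w z v / deg w z * (f v - f z)^2"
    by (intro mult_nonneg_nonneg Pf_w_nn zero_le_power2)
  ultimately have "\<forall>v\<in>nbrs w z. w z v / deg w z * (f v - f z)^2 = 0"
    using sum_nonneg_eq_0_iff[OF fin_nbrs, of z "\<lambda>v. w z v / deg w z * (f v - f z)^2"] by blast
  then have "w z u / deg w z * (f u - f z)^2 = 0" using assms(2) by blast
  then have "(f u - f z)^2 = 0" using Pf_pos_w[OF assms(2)] by (simp only: mult_eq_0_iff) linarith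
  then show ?thesis by simp
qed

lemma into_B: assumes "u \<notin> C" "u \<noteq> x" "u \<noteq> y" "v \<in> C" "v \<in> nbrs w u" shows "u \<in> B"
proof -
  have "u \<in> nbrs w v" using assms(5) adj_sym by (auto simp: nbrs_def)
  then have "f u = f v" using C_nbr[OF assms(4)] by blast
  then have "f u \<noteq> 0" using assms(4) by (auto simp: C_def)
  then show ?thesis using assms(1-3) \<sigma>_nn[of u] by (auto simp: B_def C_def)
qed

lemma QB_lim: "(\<lambda>k. (Q ^^ k) indB g) \<longlonglongrightarrow> 0"
proof -
  obtain c where c: "c > 0" "\<forall>z\<in>B. c \<le> \<sigma> z"
  proof (cases "B = {}")
    case True then show ?thesis using that[of 1] by auto
  next
    case False
    show ?thesis
      by (rule that[of "Min (\<sigma> ` B)"]) (use B_fin False in \<open>auto simp: B_def\<close>)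
  qed
  have le: "indB z \<le> (1/c) * \<sigma> z" for z
    using c \<sigma>_nn[of z] by (auto simp: indB_def field_simps)
  have l: "(\<lambda>k. (1/c) * (Q ^^ k) \<sigma> g) \<longlonglongrightarrow> (1/c) * 0"
    by (intro tendsto_mult_left Q\<sigma>_lim)
  have e1: "\<forall>\<^sub>F n in sequentially. 0 \<le> (Q ^^ n) indB g"
    by (intro always_eventually allI Qn_nonneg) (simp add: indB_def)
  have "(Q ^^ n) indB g \<le> (Q ^^ n) (\<lambda>z. (1/c) * \<sigma> z) g" for n
    by (rule Qn_mono) (rule le)
  then have "(Q ^^ n) indB g \<le> (1/c) * (Q ^^ n) \<sigma> g" for n
    by (simp only: Qn_scale)
  then have e2: "\<forall>\<^sub>F n in sequentially. (Q ^^ n) indB g \<le> (1/c) * (Q ^^ n) \<sigma> g"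
    by (intro always_eventually allI)
  show ?thesis using tendsto_sandwich[OF e1 e2 tendsto_const] l by simp
qed

end


context H begin

primrec S :: "nat \<Rightarrow> 'v \<Rightarrow> real" where
  "S 0 z = indC z"
| "S (Suc m) z = (if z \<in> C then Pf w (S m) z else 0)"

lemma S_bnd: "0 \<le> S m z \<and> S m z \<le> 1"
proof (induction m arbitrary: z)
  case 0 then show ?case by (simp add: indC_def)
next
  case (Suc m) then show ?case by (auto intro!: Pf_nonneg Pf_le_const)
qed

lemma S_out: "z \<notin> C \<Longrightarrow> S m z = 0"
  by (cases m) (auto simp: indC_def)

lemma S_anti: "S (Suc m) z \<le> S m z"
proof (induction m arbitrary: z)
  case 0 then show ?case by (auto simp: indC_def intro!: Pf_le_const S_bnd[THEN conjunct2])
next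
  case (Suc m)
  show ?case
  proof (cases "z \<in> C")
    case True
    have "Pf w (S (Suc m)) z \<le> Pf w (S m) z" by (intro Pf_mono Suc.IH)
    then show ?thesis using True by simp
  qed simp
qed

lemma S_anti_le: "m \<le> m' \<Longrightarrow> S m' z \<le> S m z"
  using lift_Suc_antimono_le[of "\<lambda>m. S m z", OF S_anti] by blast

lemma S_shift: assumes "\<And>z. S k z \<le> \<delta>" shows "S (m + k) z \<le> \<delta> * S m z"
proof (induction m arbitrary: z)
  case 0
  show ?case
  proof (cases "z \<in> C")
    case True then show ?thesis using assms[of z] by (simp add: indC_def)
  next
    case False then show ?thesis using S_out[OF False] by (simp add: indC_def)
  qed
next
  case (Suc m)
  show ?case
  proof (cases "z \<in> C")
    case True
    have "Pf w (S (m + k)) z \<le> Pf w (\<lambda>u. \<delta> * S m u) z" by (intro Pf_mono Suc.IH)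
    then show ?thesis using True by (simp add: Pf_scale)
  qed simp
qed

lemma S_pow: assumes "0 \<le> \<delta>" "\<And>z. S k z \<le> \<delta>" shows "S (j * k) z \<le> \<delta> ^ j"
proof (induction j arbitrary: z)
  case 0 then show ?case using S_bnd[of 0 z] by simp
next
  case (Suc j)
  have "S (Suc j * k) z = S (j * k + k) z" by (simp add: add.commute)
  also have "\<dots> \<le> \<delta> * S (j * k) z" by (rule S_shift[OF assms(2)])
  also have "\<dots> \<le> \<delta> * \<delta> ^ j" by (intro mult_left_mono Suc.IH assms(1))
  finally show ?case by simp
qed

lemma S_path: "(adj w ^^ k) z t \<Longrightarrow> t \<notin> C \<Longrightarrow> S k z < 1"
proof (induction k arbitrary: z)
  case 0 then show ?case by (simp add: indC_def)
next
  case (Suc k)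
  from relpowp_Suc_D2[OF Suc.prems(1)] obtain v where v: "adj w z v" "(adj w ^^ k) v t" by blast
  have vn: "v \<in> nbrs w z" using v(1) by (simp add: nbrs_def)
  show ?case
  proof (cases "z \<in> C")
    case True
    have "Pf w (S k) z < Pf w (\<lambda>_. 1) z"
      unfolding Pf_def
    proof (rule sum_strict_mono_ex1[OF fin_nbrs])
      show "\<forall>u\<in>nbrs w z. w z u / deg w z * S k u \<le> w z u / deg w z * 1"
        using S_bnd by (intro ballI mult_left_mono Pf_w_nn) auto
      show "\<exists>u\<in>nbrs w z. w z u / deg w z * S k u < w z u / deg w z * 1"
        using Suc.IH[OF v(2) Suc.prems(2)] Pf_pos_w[OF vn] vn by (intro bexI[of _ v] mult_strict_left_mono) auto
    qed
    then show ?thesis using True by simp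
  qed simp
qed

lemma S_small: assumes "\<epsilon> > 0" shows "\<exists>m. \<forall>z. S m z \<le> \<epsilon>"
proof -
  have "\<exists>k. S k z < 1" if "z \<in> C" for z
  proof -
    obtain t where t: "t \<notin> C" using ex_new_if_finite[OF inf C_fin] by blast
    obtain k where "(adj w ^^ k) z t" using conn by (auto simp: connected_graph_def)
    then show ?thesis using S_path t by blast
  qed
  then obtain kf where kf: "\<And>z. z \<in> C \<Longrightarrow> S (kf z) z < 1" by metis
  define m0 where "m0 = Max (insert 0 (kf ` C))"
  have m0: "S m0 z < 1" if "z \<in> C" for z
  proof -
    have "kf z \<le> m0" unfolding m0_def using C_fin that by (intro Max_ge) auto
    then show ?thesis using S_anti_le kf[OF that] by (meson le_less_trans)
  qed
  define \<delta> where "\<delta> = Max (insert 0 ((\<lambda>z. S m0 z) ` C))"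
  have d0: "0 \<le> \<delta>" unfolding \<delta>_def using C_fin by (intro Max_ge) auto
  have d1: "\<delta> < 1" unfolding \<delta>_def using C_fin m0 by (subst Max_less_iff) auto
  have dz: "S m0 z \<le> \<delta>" for z
  proof (cases "z \<in> C")
    case True then show ?thesis unfolding \<delta>_def using C_fin by (intro Max_ge) auto
  next
    case False then show ?thesis using S_out d0 by simp
  qed
  obtain j where j: "\<delta> ^ j < \<epsilon>" using real_arch_pow_inv[OF assms d1] by blast
  show ?thesis using S_pow[OF d0 dz, of j] j by (intro exI[of _ "j * m0"]) (meson less_imp_le order.trans)
qed

lemma key: assumes "z \<noteq> x" "z \<noteq> y" shows "Pf w (S m) z \<le> S (Suc m) z + indB z"
proof (cases "z \<in> C")
  case True
  have "0 \<le> indB z" by (simp add: indB_def)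
  then show ?thesis using True by simp
next
  case False
  show ?thesis
  proof (cases "z \<in> B")
    case True
    have "Pf w (S m) z \<le> 1" by (intro Pf_le_const) (use S_bnd in blast)
    then show ?thesis using True False by (simp add: indB_def)
  next
    case nB: False
    have "Pf w (S m) z = Pf w (\<lambda>_. 0) z"
    proof (rule Pf_cong)
      fix u assume u: "u \<in> nbrs w z"
      show "S m u = 0"
      proof (cases "u \<in> C")
        case True then show ?thesis using into_B[OF False assms True u] nB by blast
      qed (rule S_out)
    qed
    then show ?thesis using False nB by (simp add: indB_def)
  qed
qed

lemma QC_decomp: "(Q ^^ m) indC z \<le> S m z + (\<Sum>j<m. (Q ^^ j) indB z)"
proof (induction m arbitrary: z)
  case 0 then show ?case by simp
next
  case (Suc m)
  have nn: "0 \<le> S (Suc m) z + (\<Sum>j<Suc m. (Q ^^ j) indB z)"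
  proof (rule add_nonneg_nonneg)
    show "0 \<le> S (Suc m) z" using S_bnd[of "Suc m" z] by blast
    show "0 \<le> (\<Sum>j<Suc m. (Q ^^ j) indB z)"
      by (intro sum_nonneg Qn_nonneg) (simp add: indB_def)
  qed
  show ?case
  proof (cases "z = x \<or> z = y")
    case True then show ?thesis using nn by auto
  next
    case False
    have "(Q ^^ Suc m) indC z = Pf w ((Q ^^ m) indC) z" using False by (simp add: Q_out)
    also have "\<dots> \<le> Pf w (\<lambda>u. S m u + (\<Sum>j<m. (Q ^^ j) indB u)) z"
      by (intro Pf_mono Suc.IH)
    also have "\<dots> = Pf w (S m) z + (\<Sum>j<m. (Q ^^ Suc j) indB z)"
      using False by (simp add: Pf_add Pf_sum Q_out)
    also have "\<dots> \<le> S (Suc m) z + indB z + (\<Sum>j<m. (Q ^^ Suc j) indB z)"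
      using key False by simp
    also have "\<dots> = S (Suc m) z + (\<Sum>j<Suc m. (Q ^^ j) indB z)"
      by (subst sum.lessThan_Suc_shift) simp
    finally show ?thesis .
  qed
qed

lemma QC_lim: "(\<lambda>n. (Q ^^ n) indC g) \<longlonglongrightarrow> 0"
proof (rule LIMSEQ_I)
  fix r :: real assume r: "0 < r"
  obtain m where m: "\<And>z. S m z \<le> r/2" using S_small[of "r/2"] r by auto
  have T: "(\<lambda>k. \<Sum>j<m. (Q ^^ (k + j)) indB g) \<longlonglongrightarrow> (\<Sum>j<m. 0)"
    by (intro tendsto_sum LIMSEQ_ignore_initial_segment[OF QB_lim])
  obtain K0 where K0: "\<And>k. k \<ge> K0 \<Longrightarrow> norm ((\<Sum>j<m. (Q ^^ (k + j)) indB g) - 0) < r/2"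
    using LIMSEQ_D[OF T, of "r/2"] r by auto
  show "\<exists>no. \<forall>n\<ge>no. norm ((Q ^^ n) indC g - 0) < r"
  proof (intro exI allI impI)
    fix n assume n: "n \<ge> K0 + m"
    define k where "k = n - m"
    have nk: "n = k + m" and kK: "k \<ge> K0" using n by (auto simp: k_def)
    have "(Q ^^ n) indC g = (Q ^^ k) ((Q ^^ m) indC) g" by (simp add: nk Qn_comp)
    also have "\<dots> \<le> (Q ^^ k) (\<lambda>z. S m z + (\<Sum>j<m. (Q ^^ j) indB z)) g"
      by (intro Qn_mono QC_decomp)
    also have "\<dots> = (Q ^^ k) (S m) g + (\<Sum>j<m. (Q ^^ (k + j)) indB g)"
      by (simp add: Qn_add Qn_sum Qn_comp)
    also have "\<dots> < r/2 + r/2"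
      using K0[OF kK] Qn_le_const[of "S m" "r/2" k g] m r by fastforce
    finally have "(Q ^^ n) indC g < r" by simp
    moreover have "0 \<le> (Q ^^ n) indC g" by (intro Qn_nonneg) (simp add: indC_def)
    ultimately show "norm ((Q ^^ n) indC g - 0) < r" by simp
  qed
qed

definition F :: real where "F = Max (insert 0 ((\<lambda>z. \<bar>f z\<bar>) ` {z. f z \<noteq> 0}))"

lemma F_nn: "0 \<le> F"
  unfolding F_def using fs by (intro Max_ge) auto

lemma F_ge: "\<bar>f z\<bar> \<le> F"
proof (cases "f z = 0")
  case True then show ?thesis using F_nn by simp
next
  case False then show ?thesis unfolding F_def using fs by (intro Max_ge) auto
qed

lemma f0_bnd: "\<bar>f0 z\<bar> \<le> F * (indB z + indC z)"
proof (cases "z \<noteq> x \<and> z \<noteq> y \<and> f z \<noteq> 0")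
  case False
  then have "f0 z = 0" unfolding f0_def by auto
  moreover have "0 \<le> indB z" "0 \<le> indC z" unfolding indB_def indC_def by auto
  ultimately show ?thesis using F_nn by simp
next
  case True
  then have z: "z \<noteq> x" "z \<noteq> y" "f z \<noteq> 0" by auto
  have f0z: "f0 z = f z" unfolding f0_def using z by simp
  have "indB z + indC z = 1"
  proof (cases "\<sigma> z = 0")
    case True
    then have "z \<in> C" "z \<notin> B" unfolding B_def C_def using z by auto
    then show ?thesis unfolding indB_def indC_def by simp
  next
    case False
    then have "\<sigma> z > 0" using \<sigma>_nn[of z] by linarith
    then have "z \<in> B" "z \<notin> C" unfolding B_def C_def using z False by auto
    then show ?thesis unfolding indB_def indC_def by simp
  qed
  then show ?thesis using F_ge[of z] f0z by simp
qed

lemma R_lim: "(\<lambda>n. (Q ^^ n) f0 g) \<longlonglongrightarrow> 0"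
proof -
  have up: "(Q ^^ n) f0 g \<le> F * ((Q ^^ n) indB g + (Q ^^ n) indC g)" for n
  proof -
    have "(Q ^^ n) f0 g \<le> (Q ^^ n) (\<lambda>z. F * (indB z + indC z)) g"
      by (rule Qn_mono) (rule abs_le_D1[OF f0_bnd])
    then show ?thesis by (simp only: Qn_scale Qn_add)
  qed
  have lo: "- (F * ((Q ^^ n) indB g + (Q ^^ n) indC g)) \<le> (Q ^^ n) f0 g" for n
  proof -
    have "(Q ^^ n) (\<lambda>z. (-1) * f0 z) g \<le> (Q ^^ n) (\<lambda>z. F * (indB z + indC z)) g"
      by (rule Qn_mono) (use abs_le_D2[OF f0_bnd] in simp)
    then have "(-1) * (Q ^^ n) f0 g \<le> F * ((Q ^^ n) indB g + (Q ^^ n) indC g)"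
      by (simp only: Qn_scale Qn_add)
    then show ?thesis by linarith
  qed
  have l: "(\<lambda>n. F * ((Q ^^ n) indB g + (Q ^^ n) indC g)) \<longlonglongrightarrow> F * (0 + 0)"
    by (intro tendsto_mult_left tendsto_add QB_lim QC_lim)
  then have l': "(\<lambda>n. F * ((Q ^^ n) indB g + (Q ^^ n) indC g)) \<longlonglongrightarrow> 0" by simp
  have l2: "(\<lambda>n. - (F * ((Q ^^ n) indB g + (Q ^^ n) indC g))) \<longlonglongrightarrow> - 0"
    by (intro tendsto_minus l')
  then have l2': "(\<lambda>n. - (F * ((Q ^^ n) indB g + (Q ^^ n) indC g))) \<longlonglongrightarrow> 0" by simp
  have e1: "\<forall>\<^sub>F n in sequentially. - (F * ((Q ^^ n) indB g + (Q ^^ n) indC g)) \<le> (Q ^^ n) f0 g"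
    using lo by (intro always_eventually allI)
  have e2: "\<forall>\<^sub>F n in sequentially. (Q ^^ n) f0 g \<le> F * ((Q ^^ n) indB g + (Q ^^ n) indC g)"
    using up by (intro always_eventually allI)
  show ?thesis using e1 e2 l2' l' by (rule tendsto_sandwich)
qed

lemma hitA_lim: "(\<lambda>n. hitA w a b n g) \<longlonglongrightarrow> (SUP n. hitA w a b n g)" if "a \<noteq> b"
proof (rule LIMSEQ_incseq_SUP)
  show "bdd_above (range (\<lambda>n. hitA w a b n g))" using hitA_bnd by (auto intro!: bdd_aboveI)
  show "incseq (\<lambda>n. hitA w a b n g)" using hitA_mono[OF that] by (intro incseq_SucI) auto
qed

lemma main_identity: "f g = f x * (SUP n. hitA w x y n g) + f y * (SUP n. hitA w y x n g)"
proof -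
  have L: "(\<lambda>n. f x * hitA w x y n g + f y * hitA w y x n g + (Q ^^ n) f0 g)
        \<longlonglongrightarrow> f x * (SUP n. hitA w x y n g) + f y * (SUP n. hitA w y x n g) + 0"
    by (intro tendsto_add tendsto_mult_left hitA_lim R_lim xy not_sym[OF xy])
  have E: "(\<lambda>n. f x * hitA w x y n g + f y * hitA w y x n g + (Q ^^ n) f0 g) = (\<lambda>n. f g)"
    by (rule ext) (rule identity[symmetric])
  from L[unfolded E] show ?thesis by (simp add: LIMSEQ_const_iff)
qed

end


context G begin

lemma hitA_limG: "(\<lambda>n. hitA w a b n g) \<longlonglongrightarrow> (SUP n. hitA w a b n g)" if "a \<noteq> b"
proof (rule LIMSEQ_incseq_SUP)
  show "bdd_above (range (\<lambda>n. hitA w a b n g))" using hitA_bnd by (auto intro!: bdd_aboveI)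
  show "incseq (\<lambda>n. hitA w a b n g)" using hitA_mono[OF that] by (intro incseq_SucI) auto
qed

lemma hitH_lim: "(\<lambda>n. hitH w a b n g) \<longlonglongrightarrow> (SUP n. hitH w a b n g)"
proof (rule LIMSEQ_incseq_SUP)
  show "bdd_above (range (\<lambda>n. hitH w a b n g))" using hitH_bnd by (auto intro!: bdd_aboveI)
  show "incseq (\<lambda>n. hitH w a b n g)" using hitH_mono by (intro incseq_SucI) auto
qed

lemma hit_first_eq: "hit_first w g a b = (SUP n. hitA w a b n g)"
  by (simp add: hit_first_def hitA_def)

lemma hit_either_eq: "hit_either w g a b = (SUP n. hitH w a b n g)"
  by (simp add: hit_either_def hitH_def)

lemma hit_either_pos: "hit_either w g a b > 0"
proof -
  obtain k where k: "(adj w ^^ k) g a" using conn by (auto simp: connected_graph_def)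
  have "0 < hitH w a b k g" using hitH_pos[OF k] by simp
  also have "\<dots> \<le> (SUP n. hitH w a b n g)"
    using hitH_bnd by (intro cSUP_upper) (auto intro!: bdd_aboveI)
  finally show ?thesis by (simp add: hit_either_eq)
qed

lemma hit_either_sum: assumes "a \<noteq> b"
  shows "hit_either w g a b = hit_first w g a b + hit_first w g b a"
proof -
  have L: "(\<lambda>n. hitA w a b n g + hitA w b a n g) \<longlonglongrightarrow> (SUP n. hitA w a b n g) + (SUP n. hitA w b a n g)"
    by (intro tendsto_add hitA_limG assms not_sym[OF assms])
  have E: "(\<lambda>n. hitA w a b n g + hitA w b a n g) = (\<lambda>n. hitH w a b n g)"
    by (rule ext) (rule hitH_eq[OF assms, symmetric])
  from L[unfolded E] hitH_lim have "(SUP n. hitH w a b n g) = (SUP n. hitA w a b n g) + (SUP n. hitA w b a n g)"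
    using LIMSEQ_unique by blast
  then show ?thesis by (simp add: hit_either_eq hit_first_eq)
qed

end

theorem lemma6p4:
  fixes w :: "'v \<Rightarrow> 'v \<Rightarrow> real" and e x y :: 'v and f :: "'v \<Rightarrow> real"
  assumes "weighted_graph w"
    and "connected_graph w"
    and "locally_finite w"
    and "vertex_transitive w"
    and "finite {z. f z \<noteq> 0}"
    and "f \<noteq> (\<lambda>_. 0)"
    and "\<forall>z. z \<noteq> x \<and> z \<noteq> y \<longrightarrow> harmonic_at w f z"
  shows "\<exists>N::nat. N > 0 \<and> (\<exists>c. \<forall>g. gdist w e g \<ge> N \<longrightarrow> cond_hit w g x y = c)"
proof (cases "\<exists>N0. \<forall>g. gdist w e g < N0")
  case True
  then obtain N0 where N0: "\<And>g. gdist w e g < N0" by blast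
  show ?thesis
  proof (intro exI[of _ "Suc N0"] conjI exI[of _ 0] allI impI)
    show "0 < Suc N0" by simp
    fix g assume "Suc N0 \<le> gdist w e g"
    then show "cond_hit w g x y = 0" using N0[of g] by simp
  qed
next
  case False
  have infV: "infinite (UNIV :: 'v set)"
  proof
    assume fin: "finite (UNIV :: 'v set)"
    have "gdist w e g < Suc (Max (range (gdist w e)))" for g
      using fin by (simp add: le_imp_less_Suc)
    then show False using False by blast
  qed
  interpret G w using assms(1-3) infV by unfold_locales
  show ?thesis
  proof (cases "x = y")
    case True
    have "cond_hit w g x y = 1" for g
    proof -
      have ev: "{p. x \<in> set p \<and> x \<notin> set (takeWhile (\<lambda>v. v \<noteq> x) p)} = {p. x \<in> set p \<or> x \<in> set p}"
        by (auto dest: set_takeWhileD)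
      have "hit_first w g x x = hit_either w g x x"
        unfolding hit_first_def hit_either_def ev ..
      then show ?thesis using hit_either_pos[of g x x] True by (simp add: cond_hit_def)
    qed
    then show ?thesis by (intro exI[of _ 1]) auto
  next
    case xy: False
    interpret H w x y f using xy assms(5,7) by unfold_locales
    define Sp where "Sp = insert x (insert y {z. f z \<noteq> 0})"
    have Spf: "finite Sp" using assms(5) by (simp add: Sp_def)
    define N where "N = Suc (Max (gdist w e ` Sp))"
    have far: "g \<notin> Sp" if "gdist w e g \<ge> N" for g
    proof
      assume "g \<in> Sp"
      then have "gdist w e g \<le> Max (gdist w e ` Sp)" using Spf by (intro Max_ge) auto
      then show False using that by (simp add: N_def)
    qed
    have ident: "f g = f x * hit_first w g x y + f y * hit_first w g y x" for g
      using main_identity[of g] by (simp add: hit_first_eq)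
    have fxy: "f x \<noteq> f y"
    proof
      assume eq: "f x = f y"
      have fg: "f g = f x * hit_either w g x y" for g
        unfolding hit_either_sum[OF xy, of g] distrib_left using ident[of g] eq by simp
      show False
      proof (cases "f x = 0")
        case True
        have "f g = 0" for g using fg[of g] unfolding True by simp
        then have "f = (\<lambda>_. 0)" by (rule ext)
        then show False using assms(6) by blast
      next
        case False
        obtain g0 where "g0 \<notin> {z. f z \<noteq> 0}" using ex_new_if_finite[OF infV assms(5)] by blast
        then have "f g0 = 0" by simp
        then have "f x * hit_either w g0 x y = 0" using fg[of g0] by linarith
        then have "hit_either w g0 x y = 0" using False by simp
        then show False using hit_either_pos[of g0 x y] by simp
      qed
    qed
    show ?thesis
    proof (intro exI conjI allI impI)
      show "0 < N" by (simp add: N_def)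
      fix g assume g: "N \<le> gdist w e g"
      have "f g = 0" using far[OF g] by (simp add: Sp_def)
      then have id0: "f x * hit_first w g x y + f y * hit_first w g y x = 0" using ident[of g] by linarith
      have Hs: "hit_either w g x y = hit_first w g x y + hit_first w g y x" by (rule hit_either_sum[OF xy])
      have Hp: "hit_either w g x y > 0" by (rule hit_either_pos)
      have "hit_first w g x y * (f x - f y) = - f y * hit_either w g x y"
        using id0 Hs by (simp add: algebra_simps)
      then show "cond_hit w g x y = - f y / (f x - f y)"
        using Hp fxy by (simp add: cond_hit_def field_simps)
    qed
  qed
qed


end
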